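(* The collinearity graph of $\mathcal{S}$ is connected and has diameter $3$.
   Context: Let $S=(P,L)$ and $S'=(P',L')$ be generalized quadrangles of order $(2,2)$ (every line has 3 points, every point lies on 3 lines, and for each point $x$ and line $l\not\ni x$ exactly one point of $l$ is collinear with $x$), with an isomorphism $x\mapsto x'$ from $S$ to $S'$. In a point-line geometry, $x^{\perp}$ is $x$ together with all points collinear with $x$, and $A^{\perp}=\bigcap_{a\in A}a^{\perp}$. A triad is a set of three pairwise non-collinear points, complete if $|T^{\perp}|=3$. The geometry $\mathcal{S}=(\mathcal{P},\mathcal{L})$ has point set $\mathcal{P}=\{(x,y')\in P\times P':y'\in x'^{\perp}\}$ and lines all $3$-subsets $\{(x,u'),(y,v'),(z,w')\}$ of $\mathcal{P}$ where $T=\{x,y,z\}$ (three distinct points) is a line or a complete triad of $S$ and $\{u',v',w'\}=T'^{\perp}$ in $S'$ with $u',v',w'$ distinct. The collinearity graph has vertex set $\mathcal{P}$, two distinct points adjacent when they lie on a common line. *)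

theory Defs
  imports Main
begin

definition collinear :: "'p set set \<Rightarrow> 'p \<Rightarrow> 'p \<Rightarrow> bool" where
  "collinear L x y \<longleftrightarrow> (\<exists>l\<in>L. x \<in> l \<and> y \<in> l)"

definition perp :: "'p set \<Rightarrow> 'p set set \<Rightarrow> 'p \<Rightarrow> 'p set" where
  "perp P L x = insert x {y \<in> P. collinear L x y}"

definition perpset :: "'p set \<Rightarrow> 'p set set \<Rightarrow> 'p set \<Rightarrow> 'p set" where
  "perpset P L A = {y \<in> P. \<forall>a\<in>A. y \<in> perp P L a}"

definition gq22 :: "'p set \<Rightarrow> 'p set set \<Rightarrow> bool" where
  "gq22 P L \<longleftrightarrow> P \<noteq> {} \<and>
     (\<forall>l\<in>L. l \<subseteq> P \<and> card l = 3) \<and>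
     (\<forall>x\<in>P. card {l\<in>L. x \<in> l} = 3) \<and>
     (\<forall>x\<in>P. \<forall>l\<in>L. x \<notin> l \<longrightarrow> (\<exists>!y. y \<in> l \<and> collinear L x y))"

definition triad :: "'p set set \<Rightarrow> 'p set \<Rightarrow> bool" where
  "triad L T \<longleftrightarrow> card T = 3 \<and> (\<forall>x\<in>T. \<forall>y\<in>T. x \<noteq> y \<longrightarrow> \<not> collinear L x y)"

definition complete_triad :: "'p set \<Rightarrow> 'p set set \<Rightarrow> 'p set \<Rightarrow> bool" where
  "complete_triad P L T \<longleftrightarrow> T \<subseteq> P \<and> triad L T \<and> card (perpset P L T) = 3"

definition geom_iso :: "('p \<Rightarrow> 'q) \<Rightarrow> 'p set \<Rightarrow> 'p set set \<Rightarrow> 'q set \<Rightarrow> 'q set set \<Rightarrow> bool" where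
  "geom_iso f P L P' L' \<longleftrightarrow> bij_betw f P P' \<and> (\<lambda>l. f ` l) ` L = L'"

definition bigP :: "'p set \<Rightarrow> 'p set set \<Rightarrow> 'q set \<Rightarrow> 'q set set \<Rightarrow> ('p \<Rightarrow> 'q) \<Rightarrow> ('p \<times> 'q) set" where
  "bigP P L P' L' f = {(x, y). x \<in> P \<and> y \<in> perp P' L' (f x)}"

definition bigL :: "'p set \<Rightarrow> 'p set set \<Rightarrow> 'q set \<Rightarrow> 'q set set \<Rightarrow> ('p \<Rightarrow> 'q) \<Rightarrow> ('p \<times> 'q) set set" where
  "bigL P L P' L' f =
    {{(x, u), (y, v), (z, w)} | x y z u v w.
       (x, u) \<in> bigP P L P' L' f \<and> (y, v) \<in> bigP P L P' L' f \<and> (z, w) \<in> bigP P L P' L' f \<and>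
       x \<noteq> y \<and> y \<noteq> z \<and> x \<noteq> z \<and>
       ({x, y, z} \<in> L \<or> complete_triad P L {x, y, z}) \<and>
       u \<noteq> v \<and> v \<noteq> w \<and> u \<noteq> w \<and>
       {u, v, w} = perpset P' L' (f ` {x, y, z})}"

definition coll_graph :: "'a set \<Rightarrow> 'a set set \<Rightarrow> 'a \<Rightarrow> 'a \<Rightarrow> bool" where
  "coll_graph V E a b \<longleftrightarrow> a \<in> V \<and> b \<in> V \<and> a \<noteq> b \<and> (\<exists>l\<in>E. a \<in> l \<and> b \<in> l)"

definition graph_connected :: "'a set \<Rightarrow> ('a \<Rightarrow> 'a \<Rightarrow> bool) \<Rightarrow> bool" where
  "graph_connected V adj \<longleftrightarrow> (\<forall>a\<in>V. \<forall>b\<in>V. \<exists>n. (adj ^^ n) a b)"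

definition graph_dist :: "('a \<Rightarrow> 'a \<Rightarrow> bool) \<Rightarrow> 'a \<Rightarrow> 'a \<Rightarrow> nat" where
  "graph_dist adj a b = (LEAST n. (adj ^^ n) a b)"

definition graph_diameter :: "'a set \<Rightarrow> ('a \<Rightarrow> 'a \<Rightarrow> bool) \<Rightarrow> nat \<Rightarrow> bool" where
  "graph_diameter V adj d \<longleftrightarrow>
     (\<forall>a\<in>V. \<forall>b\<in>V. graph_dist adj a b \<le> d) \<and> (\<exists>a\<in>V. \<exists>b\<in>V. graph_dist adj a b = d)"

end

theory Submission
  imports Defs
begin


locale gq =
  fixes P :: "'p set" and L :: "'p set set"
  assumes gq: "gq22 P L"
begin

definition pp :: "'p \<Rightarrow> 'p \<Rightarrow> bool" where
  "pp x y \<longleftrightarrow> x \<in> P \<and> y \<in> P \<and> (x = y \<or> collinear L x y)"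

lemma gqD: "P \<noteq> {} \<and> (\<forall>l\<in>L. l \<subseteq> P \<and> card l = 3) \<and> (\<forall>x\<in>P. card {l\<in>L. x \<in> l} = 3) \<and>
  (\<forall>x\<in>P. \<forall>l\<in>L. x \<notin> l \<longrightarrow> (\<exists>!y. y \<in> l \<and> collinear L x y))"
  using gq unfolding gq22_def .
lemmas gqP = gqD[THEN conjunct1] gqD[THEN conjunct2, THEN conjunct1] gqD[THEN conjunct2, THEN conjunct2, THEN conjunct1]
  gqD[THEN conjunct2, THEN conjunct2, THEN conjunct2]
lemma line_sub: "l \<in> L \<Longrightarrow> l \<subseteq> P" using gqP(2) by blast
lemma line_card: "l \<in> L \<Longrightarrow> card l = 3" using gqP(2) by blast
lemma line_fin: "l \<in> L \<Longrightarrow> finite l" using line_card by (metis card.infinite zero_neq_numeral)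
lemma ax: "x \<in> P \<Longrightarrow> l \<in> L \<Longrightarrow> x \<notin> l \<Longrightarrow> \<exists>!y. y \<in> l \<and> collinear L x y"
  using gqP(4) by blast
lemma nlines: "x \<in> P \<Longrightarrow> card {l\<in>L. x \<in> l} = 3" using gqP(3) by blast
lemma Pne: "P \<noteq> {}" using gqP(1) .

lemma pp_P: "pp x y \<Longrightarrow> x \<in> P \<and> y \<in> P" unfolding pp_def by auto
lemma pp_sym: "pp x y \<Longrightarrow> pp y x" unfolding pp_def collinear_def by blast
lemma pp_refl: "x \<in> P \<Longrightarrow> pp x x" unfolding pp_def by auto
lemma pp_line: "l \<in> L \<Longrightarrow> x \<in> l \<Longrightarrow> y \<in> l \<Longrightarrow> pp x y"
  unfolding pp_def collinear_def using line_sub by blast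
lemma pp_ex_line: "pp x y \<Longrightarrow> x \<noteq> y \<Longrightarrow> \<exists>l\<in>L. x \<in> l \<and> y \<in> l"
  unfolding pp_def collinear_def by blast

lemma line3: "l \<in> L \<Longrightarrow> \<exists>u v w. l = {u,v,w} \<and> u \<noteq> v \<and> v \<noteq> w \<and> u \<noteq> w"
  using line_card card_3_iff by metis

lemma third: assumes "l \<in> L" "u \<in> l" "v \<in> l" "u \<noteq> v"
  shows "\<exists>w. l = {u,v,w} \<and> w \<noteq> u \<and> w \<noteq> v"
  using line3[OF assms(1)] assms(2-4) by auto

lemma proj_unique: assumes "l \<in> L" "w \<in> P" "w \<notin> l" "s \<in> l" "t \<in> l" "pp w s" "pp w t"
  shows "s = t"
proof -
  have "collinear L w s" "collinear L w t" using assms unfolding pp_def by auto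
  then show ?thesis using ax[OF assms(2,1,3)] assms(4,5) by blast
qed

lemma proj_ex: assumes "l \<in> L" "w \<in> P" "w \<notin> l" shows "\<exists>s\<in>l. pp w s"
proof -
  obtain s where "s \<in> l" "collinear L w s" using ax[OF assms(2,1,3)] by blast
  then show ?thesis unfolding pp_def using assms line_sub by blast
qed

lemma triangle: assumes "l \<in> L" "u \<in> l" "v \<in> l" "u \<noteq> v" "pp w u" "pp w v"
  shows "w \<in> l"
  using proj_unique[OF assms(1) _ _ assms(2,3) assms(5,6)] assms(4) pp_P[OF assms(5)] by blast

lemma unique_line: assumes "l \<in> L" "m \<in> L" "u \<in> l" "v \<in> l" "u \<in> m" "v \<in> m" "u \<noteq> v"
  shows "l = m"
proof -
  have "m \<subseteq> l"
  proof
    fix w assume "w \<in> m"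
    then show "w \<in> l" using triangle[OF assms(1,3,4,7)] pp_line[OF assms(2)] assms(5,6) by blast
  qed
  then show ?thesis using card_subset_eq[OF line_fin[OF assms(1)]] line_card assms(1,2) by metis
qed

lemma lines_through: assumes "x \<in> P"
  shows "\<exists>l1 l2 l3. {l\<in>L. x \<in> l} = {l1,l2,l3} \<and> l1 \<noteq> l2 \<and> l2 \<noteq> l3 \<and> l1 \<noteq> l3"
  using nlines[OF assms] card_3_iff by metis

lemma line_exists: "x \<in> P \<Longrightarrow> \<exists>l\<in>L. x \<in> l"
  using lines_through by blast

lemma third_line: assumes "x \<in> P" "l1 \<in> L" "l2 \<in> L" "x \<in> l1" "x \<in> l2"
  shows "\<exists>m\<in>L. x \<in> m \<and> m \<noteq> l1 \<and> m \<noteq> l2"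
proof -
  obtain a b c where "{l\<in>L. x \<in> l} = {a,b,c}" "a \<noteq> b" "b \<noteq> c" "a \<noteq> c"
    using lines_through[OF assms(1)] by blast
  then show ?thesis by (smt (verit, ccfv_threshold) insertCI mem_Collect_eq)
qed

lemma only3: assumes "x \<in> P" "l1 \<in> L" "l2 \<in> L" "l3 \<in> L" "x \<in> l1" "x \<in> l2" "x \<in> l3"
  "l1 \<noteq> l2" "l2 \<noteq> l3" "l1 \<noteq> l3" "m \<in> L" "x \<in> m"
  shows "m = l1 \<or> m = l2 \<or> m = l3"
proof -
  have "{l1,l2,l3} \<subseteq> {l\<in>L. x \<in> l}" using assms by auto
  moreover have "card {l1,l2,l3} = 3" using assms by auto
  ultimately have "{l1,l2,l3} = {l\<in>L. x \<in> l}"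
    using card_subset_eq nlines[OF assms(1)] by (metis card.infinite zero_neq_numeral)
  then show ?thesis using assms by blast
qed


lemma pp_sym_iff: "pp x y \<longleftrightarrow> pp y x" using pp_sym by blast

lemma meet: assumes "l \<in> L" "m \<in> L" "x \<in> l" "a \<in> l" "x \<in> m" "q \<in> m" "x \<noteq> a" "x \<noteq> q" "pp q a"
  shows "l = m"
proof -
  have "q \<in> l" using triangle[OF assms(1,3,4,7)] pp_line[OF assms(2,6,5)] assms(9) by blast
  then show ?thesis using unique_line[OF assms(1,2,3) _ assms(5,6,8)] by blast
qed

lemma perp2: assumes "x \<in> P" "y \<in> P" "\<not> pp x y" "pp a x" "pp a y" "pp b x" "pp b y" "a \<noteq> b"
  shows "\<exists>c. c \<noteq> a \<and> c \<noteq> b \<and> pp c x \<and> pp c y \<and> (\<forall>t. pp t x \<and> pp t y \<longrightarrow> t = a \<or> t = b \<or> t = c)"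
proof -
  have ax: "a \<noteq> x" using assms pp_sym by blast
  have bx: "b \<noteq> x" using assms pp_sym by blast
  obtain la where la: "la \<in> L" "x \<in> la" "a \<in> la" using pp_ex_line[OF assms(4) ax] by blast
  obtain lb where lb: "lb \<in> L" "x \<in> lb" "b \<in> lb" using pp_ex_line[OF assms(6) bx] by blast
  have yla: "y \<notin> la" using la pp_line assms(3) by blast
  have ylb: "y \<notin> lb" using lb pp_line assms(3) by blast
  have lab: "la \<noteq> lb"
  proof
    assume "la = lb"
    then show False using proj_unique[OF la(1) assms(2) yla la(3)] lb(3) assms(5,7,8) pp_sym by blast
  qed
  obtain lc where lc: "lc \<in> L" "x \<in> lc" "lc \<noteq> la" "lc \<noteq> lb" using third_line[OF assms(1) la(1) lb(1) la(2) lb(2)] by blast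
  have ylc: "y \<notin> lc" using lc pp_line assms(3) by blast
  obtain c where c: "c \<in> lc" "pp y c" using proj_ex[OF lc(1) assms(2) ylc] by blast
  have cx: "c \<noteq> x" using c assms(3) pp_sym by blast
  have ca: "c \<noteq> a" using unique_line[OF la(1) lc(1) la(2) la(3) lc(2)] c(1) lc(3) ax by blast
  have cb: "c \<noteq> b" using unique_line[OF lb(1) lc(1) lb(2) lb(3) lc(2)] c(1) lc(4) bx by blast
  have all: "t = a \<or> t = b \<or> t = c" if t: "pp t x" "pp t y" for t
  proof -
    have tx: "t \<noteq> x" using t assms(3) pp_sym by blast
    obtain m where m: "m \<in> L" "x \<in> m" "t \<in> m" using pp_ex_line[OF t(1) tx] by blast
    have "m = la \<or> m = lb \<or> m = lc"
      using only3[OF assms(1) la(1) lb(1) lc(1) la(2) lb(2) lc(2) lab lc(4)[symmetric] lc(3)[symmetric] m(1,2)] .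
    then show ?thesis
      using proj_unique[OF _ assms(2) _ m(3)] la lb lc yla ylb ylc c t(2) assms(5,7) pp_sym by metis
  qed
  show ?thesis using ca cb c cx pp_line[OF lc(1) c(1) lc(2)] pp_sym all by blast
qed

lemma triad_perp: assumes "\<not> pp x y" "pp a x" "pp a y" "pp b x" "pp b y" "a \<noteq> b"
  shows "\<not> pp a b"
proof
  assume "pp a b"
  then obtain l where l: "l \<in> L" "a \<in> l" "b \<in> l" using pp_ex_line assms(6) by blast
  have "x \<in> l" "y \<in> l" using triangle[OF l(1,2,3) assms(6)] assms pp_sym by blast+
  then show False using pp_line[OF l(1)] assms(1) by blast
qed

lemma regular: assumes "x \<in> P" "y \<in> P" "\<not> pp x y" "pp a x" "pp a y" "pp b x" "pp b y" "a \<noteq> b"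
  shows "\<exists>z c. z \<noteq> x \<and> z \<noteq> y \<and> c \<noteq> a \<and> c \<noteq> b \<and> \<not> pp x z \<and> \<not> pp y z \<and> z \<in> P \<and> c \<in> P \<and>
     pp c z \<and> pp c x \<and> pp c y \<and> pp a z \<and> pp b z \<and>
     (\<forall>t. pp t x \<and> pp t y \<longrightarrow> t = a \<or> t = b \<or> t = c)"
proof -
  obtain c where c: "c \<noteq> a" "c \<noteq> b" "pp c x" "pp c y" and call: "\<forall>t. pp t x \<and> pp t y \<longrightarrow> t = a \<or> t = b \<or> t = c"
    using perp2[OF assms] by blast
  have aP: "a \<in> P" "b \<in> P" "c \<in> P" using assms(4,6) c(3) pp_P by blast+
  have xy: "x \<noteq> y" using assms(1,3) pp_refl by blast
  have nab: "\<not> pp a b" using triad_perp[OF assms(3-8)] .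
  have nac: "\<not> pp a c" using triad_perp[OF assms(3-5) c(3,4)] c(1) by metis
  have nbc: "\<not> pp b c" using triad_perp[OF assms(3) assms(6,7) c(3,4)] c(2) by metis
  obtain z where z: "z \<noteq> x" "z \<noteq> y" "pp z a" "pp z b"
    using perp2[OF aP(1,2) nab pp_sym[OF assms(4)] pp_sym[OF assms(6)] pp_sym[OF assms(5)] pp_sym[OF assms(7)] xy] by blast
  have nxz: "\<not> pp x z" using triad_perp[OF nab pp_sym[OF assms(4)] pp_sym[OF assms(6)] z(3,4)] z(1) by metis
  have nyz: "\<not> pp y z" using triad_perp[OF nab pp_sym[OF assms(5)] pp_sym[OF assms(7)] z(3,4)] z(2) by metis
  have zP: "z \<in> P" using z(3) pp_P by blast
  have zc: "pp z c"
  proof (rule ccontr)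
    assume nzc: "\<not> pp z c"
    have cx: "c \<noteq> x" "c \<noteq> y" using c(3,4) assms(3) pp_sym by blast+
    obtain lcx where lcx: "lcx \<in> L" "c \<in> lcx" "x \<in> lcx" using pp_ex_line[OF c(3) cx(1)] by blast
    obtain q where q: "lcx = {c,x,q}" "q \<noteq> c" "q \<noteq> x" using third[OF lcx(1,2,3) cx(1)] by blast
    have qin: "q \<in> lcx" using q(1) by simp
    obtain lcy where lcy: "lcy \<in> L" "c \<in> lcy" "y \<in> lcy" using pp_ex_line[OF c(4) cx(2)] by blast
    obtain r where r: "lcy = {c,y,r}" "r \<noteq> c" "r \<noteq> y" using third[OF lcy(1,2,3) cx(2)] by blast
    have rin: "r \<in> lcy" using r(1) by simp
    have zlcx: "z \<notin> lcx" using pp_line[OF lcx(1) _ lcx(2)] nzc by blast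
    have zlcy: "z \<notin> lcy" using pp_line[OF lcy(1) _ lcy(2)] nzc by blast
    obtain s where s: "s \<in> lcx" "pp z s" using proj_ex[OF lcx(1) zP zlcx] by blast
    have "s \<noteq> c" "s \<noteq> x" using s(2) nzc nxz pp_sym by blast+
    then have zq: "pp z q" using s q(1) by auto
    obtain s' where s': "s' \<in> lcy" "pp z s'" using proj_ex[OF lcy(1) zP zlcy] by blast
    have "s' \<noteq> c" "s' \<noteq> y" using s'(2) nzc nyz pp_sym by blast+
    then have zr: "pp z r" using s' r(1) by auto
    have qr: "q \<noteq> r"
    proof
      assume "q = r"
      then have "lcx = lcy" using unique_line[OF lcx(1) lcy(1) lcx(2) qin lcy(2)] rin q(2) by blast
      then show False using lcx(3) lcy(3) pp_line[OF lcy(1)] assms(3) by blast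
    qed
    have zq': "z \<noteq> q" "z \<noteq> r" using zlcx zlcy qin rin by blast+
    have za: "z \<noteq> a" "z \<noteq> b" using z(3,4) nab pp_sym by blast+
    obtain lza where lza: "lza \<in> L" "z \<in> lza" "a \<in> lza" using pp_ex_line[OF z(3) za(1)] by blast
    obtain lzb where lzb: "lzb \<in> L" "z \<in> lzb" "b \<in> lzb" using pp_ex_line[OF z(4) za(2)] by blast
    have lzab: "lza \<noteq> lzb" using lza(3) lzb(3) pp_line[OF lzb(1)] nab by blast
    have ax: "a \<noteq> x" "a \<noteq> y" "b \<noteq> x" "b \<noteq> y" using assms(3-7) pp_sym by blast+
    obtain lxa where lxa: "lxa \<in> L" "x \<in> lxa" "a \<in> lxa" using pp_ex_line[OF pp_sym[OF assms(4)]] ax(1) by metis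
    obtain lxb where lxb: "lxb \<in> L" "x \<in> lxb" "b \<in> lxb" using pp_ex_line[OF pp_sym[OF assms(6)]] ax(3) by metis
    obtain lya where lya: "lya \<in> L" "y \<in> lya" "a \<in> lya" using pp_ex_line[OF pp_sym[OF assms(5)]] ax(2) by metis
    obtain lyb where lyb: "lyb \<in> L" "y \<in> lyb" "b \<in> lyb" using pp_ex_line[OF pp_sym[OF assms(7)]] ax(4) by metis
    have qa: "q \<notin> lza"
    proof
      assume "q \<in> lza"
      then have "pp q a" using pp_line[OF lza(1) _ lza(3)] by blast
      then have "lxa = lcx" using meet[OF lxa(1) lcx(1) lxa(2,3) lcx(3) qin ax(1)[symmetric] q(3)[symmetric]] by blast
      then show False using lxa(3) lcx(2) pp_line[OF lcx(1)] nac by blast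
    qed
    have qb: "q \<notin> lzb"
    proof
      assume "q \<in> lzb"
      then have "pp q b" using pp_line[OF lzb(1) _ lzb(3)] by blast
      then have "lxb = lcx" using meet[OF lxb(1) lcx(1) lxb(2,3) lcx(3) qin ax(3)[symmetric] q(3)[symmetric]] by blast
      then show False using lxb(3) lcx(2) pp_line[OF lcx(1)] nbc by blast
    qed
    have ra: "r \<notin> lza"
    proof
      assume "r \<in> lza"
      then have "pp r a" using pp_line[OF lza(1) _ lza(3)] by blast
      then have "lya = lcy" using meet[OF lya(1) lcy(1) lya(2,3) lcy(3) rin ax(2)[symmetric] r(3)[symmetric]] by blast
      then show False using lya(3) lcy(2) pp_line[OF lcy(1)] nac by blast
    qed
    have rb: "r \<notin> lzb"
    proof
      assume "r \<in> lzb"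
      then have "pp r b" using pp_line[OF lzb(1) _ lzb(3)] by blast
      then have "lyb = lcy" using meet[OF lyb(1) lcy(1) lyb(2,3) lcy(3) rin ax(4)[symmetric] r(3)[symmetric]] by blast
      then show False using lyb(3) lcy(2) pp_line[OF lcy(1)] nbc by blast
    qed
    obtain lzq where lzq: "lzq \<in> L" "z \<in> lzq" "q \<in> lzq" using pp_ex_line[OF zq zq'(1)] by blast
    obtain lzr where lzr: "lzr \<in> L" "z \<in> lzr" "r \<in> lzr" using pp_ex_line[OF zr zq'(2)] by blast
    have n1: "lza \<noteq> lzq" using qa lzq(3) by blast
    have n2: "lzb \<noteq> lzq" using qb lzq(3) by blast
    have "lzr = lza \<or> lzr = lzb \<or> lzr = lzq"
      using only3[OF zP lza(1) lzb(1) lzq(1) lza(2) lzb(2) lzq(2) lzab n2 n1 lzr(1,2)] .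
    then have "lzr = lzq" using ra rb lzr(3) by blast
    then have "pp r q" using pp_line[OF lzq(1)] lzq(3) lzr(3) by blast
    moreover have "pp r c" using pp_line[OF lcy(1) rin lcy(2)] .
    ultimately have "r \<in> lcx" using triangle[OF lcx(1,2) qin q(2)[symmetric]] by blast
    then have "lcx = lcy" using unique_line[OF lcx(1) lcy(1) lcx(2) _ lcy(2) rin] r(2) by blast
    then show False using lcx(3) lcy(3) pp_line[OF lcy(1)] assms(3) by blast
  qed
  show ?thesis
    apply (rule exI[of _ z], rule exI[of _ c])
    using z c call nxz nyz zP aP zc pp_sym[OF z(3)] pp_sym[OF z(4)] pp_sym[OF zc] by blast
qed

end



context gq
begin

definition Rs :: "'p \<times> 'p \<Rightarrow> 'p \<times> 'p \<Rightarrow> bool" where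
  "Rs v w \<longleftrightarrow> fst v \<noteq> fst w \<and> snd v \<noteq> snd w \<and> pp (snd v) (fst v) \<and> pp (snd v) (fst w)
     \<and> pp (snd w) (fst v) \<and> pp (snd w) (fst w)"

lemma Rs_simp[simp]: "Rs (x,a) (y,b) \<longleftrightarrow> x \<noteq> y \<and> a \<noteq> b \<and> pp a x \<and> pp a y \<and> pp b x \<and> pp b y"
  unfolding Rs_def by simp

definition W2 :: "'p \<times> 'p \<Rightarrow> 'p \<times> 'p \<Rightarrow> bool" where
  "W2 v w \<longleftrightarrow> v = w \<or> Rs v w \<or> (\<exists>u. Rs v u \<and> Rs u w)"

lemma W2I2: "Rs v u \<Longrightarrow> Rs u w \<Longrightarrow> W2 v w" unfolding W2_def by blast

lemma lemA1: assumes va: "pp a x" and wb: "pp b x" and ab: "a \<noteq> b"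
  shows "W2 (x,a) (x,b)"
proof -
  have xP: "x \<in> P" "a \<in> P" "b \<in> P" using va wb pp_P by blast+
  show ?thesis
  proof (cases "a = x")
    case ax: True
    then have bx: "b \<noteq> x" using ab by simp
    obtain l where l: "l \<in> L" "x \<in> l" "b \<in> l" using pp_ex_line[OF wb bx] by blast
    obtain w where w: "l = {x,b,w}" "w \<noteq> x" "w \<noteq> b" using third[OF l bx[symmetric]] by blast
    have "pp x w" "pp w x" "pp w w" "pp x x" "pp b w" "pp b x" using pp_line[OF l(1)] w(1) by auto
    then have "Rs (x,a) (w,w)" "Rs (w,w) (x,b)" using ax w by auto
    then show ?thesis by (rule W2I2)
  next
    case ax: False
    show ?thesis
    proof (cases "b = x")
      case bx: True
      obtain l where l: "l \<in> L" "x \<in> l" "a \<in> l" using pp_ex_line[OF va ax] by blast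
      obtain w where w: "l = {x,a,w}" "w \<noteq> x" "w \<noteq> a" using third[OF l] ax by metis
      have "pp x w" "pp w x" "pp w w" "pp x x" "pp a w" "pp a x" using pp_line[OF l(1)] w(1) by auto
      then have "Rs (x,a) (w,w)" "Rs (w,w) (x,b)" using bx w by auto
      then show ?thesis by (rule W2I2)
    next
      case bx: False
      show ?thesis
      proof (cases "pp a b")
        case True
        have "Rs (x,a) (a,x)" using ax va pp_sym pp_refl xP by simp
        moreover have "Rs (a,x) (x,b)" using ax bx True va wb pp_sym pp_refl xP by simp
        ultimately show ?thesis by (rule W2I2)
      next
        case nab: False
        obtain la where la: "la \<in> L" "a \<in> la" "x \<in> la" using pp_ex_line[OF va ax] by blast
        obtain lb where lb: "lb \<in> L" "b \<in> lb" "x \<in> lb" using pp_ex_line[OF wb bx] by blast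
        obtain m where m: "m \<in> L" "a \<in> m" "m \<noteq> la" using third_line[OF xP(2) la(1) la(1) la(2) la(2)] by blast
        have bm: "b \<notin> m" using pp_line[OF m(1) _ m(2)] nab pp_sym by blast
        obtain q where q: "q \<in> m" "pp b q" using proj_ex[OF m(1) xP(3) bm] by blast
        have qa: "q \<noteq> a" using q nab pp_sym by blast
        have nxq: "\<not> pp x q"
        proof
          assume "pp x q"
          then have "q \<in> la" using triangle[OF la(1,3,2)] ax pp_line[OF m(1) q(1) m(2)] pp_sym by metis
          then show False using unique_line[OF la(1) m(1) _ la(2) q(1) m(2) qa] m(3) by blast
        qed
        have lab: "la \<noteq> lb" using la lb pp_line nab by blast
        obtain l3 where l3: "l3 \<in> L" "x \<in> l3" "l3 \<noteq> la" "l3 \<noteq> lb" using third_line[OF xP(1) la(1) lb(1) la(3) lb(3)] by blast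
        have qP: "q \<in> P" using q pp_P by blast
        have ql3: "q \<notin> l3" using pp_line[OF l3(1) l3(2)] nxq by blast
        obtain d where d: "d \<in> l3" "pp q d" using proj_ex[OF l3(1) qP ql3] by blast
        have da: "d \<noteq> a" using unique_line[OF la(1) l3(1) la(3,2) l3(2)] d(1) l3(3) ax by metis
        have db: "d \<noteq> b" using unique_line[OF lb(1) l3(1) lb(3,2) l3(2)] d(1) l3(4) bx by metis
        have "pp d x" using pp_line[OF l3(1) d(1) l3(2)] .
        moreover have "pp a q" using pp_line[OF m(1) m(2) q(1)] .
        moreover have "x \<noteq> q" using nxq xP pp_refl by blast
        ultimately have "Rs (x,a) (q,d)" "Rs (q,d) (x,b)" using da db d q va wb pp_sym by simp_all
        then show ?thesis by (rule W2I2)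
      qed
    qed
  qed
qed


lemma lemA2: assumes va: "pp a x" and ay: "pp a y" and xy: "x \<noteq> y"
  shows "W2 (x,a) (y,a)"
proof -
  have xP: "x \<in> P" "a \<in> P" "y \<in> P" using va ay pp_P by blast+
  show ?thesis
  proof (cases "a = x")
    case ax: True
    obtain l where l: "l \<in> L" "x \<in> l" "y \<in> l" using pp_ex_line[OF ay] ax xy by blast
    obtain w where w: "l = {x,y,w}" "w \<noteq> x" "w \<noteq> y" using third[OF l xy] by blast
    have "pp x w" "pp w x" "pp w w" "pp x x" "pp w y" "pp x y" using pp_line[OF l(1)] w(1) by auto
    then have "Rs (x,a) (w,w)" "Rs (w,w) (y,a)" using ax w by auto
    then show ?thesis by (rule W2I2)
  next
    case ax: False
    show ?thesis
    proof (cases "a = y")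
      case ay': True
      obtain l where l: "l \<in> L" "y \<in> l" "x \<in> l" using pp_ex_line[OF va] ay' xy by blast
      obtain w where w: "l = {x,y,w}" "w \<noteq> x" "w \<noteq> y" using third[OF l(1,3,2) xy] by blast
      have "pp y x" "pp y w" "pp w x" "pp w w" "pp w y" "pp y y" using pp_line[OF l(1)] w(1) by auto
      then have "Rs (x,a) (w,w)" "Rs (w,w) (y,a)" using ay' w xy by auto
      then show ?thesis by (rule W2I2)
    next
      case ay': False
      show ?thesis
      proof (cases "pp x y")
        case True
        have "Rs (x,a) (a,x)" using ax va pp_sym[OF va] pp_refl xP by simp
        moreover have "Rs (a,x) (y,a)" using ax ay' True va ay pp_sym[OF va] pp_refl xP by simp
        ultimately show ?thesis by (rule W2I2)
      next
        case nxy: False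
        obtain la where la: "la \<in> L" "a \<in> la" "x \<in> la" using pp_ex_line[OF va ax] by blast
        obtain m where m: "m \<in> L" "x \<in> m" "m \<noteq> la" using third_line[OF xP(1) la(1) la(1) la(3) la(3)] by blast
        have ym: "y \<notin> m" using pp_line[OF m(1) m(2)] nxy by blast
        obtain d where d: "d \<in> m" "pp y d" using proj_ex[OF m(1) xP(3) ym] by blast
        have dx: "d \<noteq> x" using d nxy pp_sym by blast
        have am: "a \<notin> m" using unique_line[OF la(1) m(1) la(3,2) m(2)] m(3) ax by blast
        have nad: "\<not> pp a d"
        proof
          assume "pp a d"
          then have "d \<in> la" using triangle[OF la(1,3,2)] ax pp_line[OF m(1) d(1) m(2)] pp_sym by metis
          then show False using unique_line[OF la(1) m(1) la(3) _ m(2) d(1)] dx m(3) by metis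
        qed
        obtain ly where ly: "ly \<in> L" "a \<in> ly" "y \<in> ly" using pp_ex_line[OF ay ay'] by blast
        have lay: "la \<noteq> ly" using la ly pp_line nxy by blast
        obtain l3 where l3: "l3 \<in> L" "a \<in> l3" "l3 \<noteq> la" "l3 \<noteq> ly" using third_line[OF xP(2) la(1) ly(1) la(2) ly(2)] by blast
        have dP: "d \<in> P" using d pp_P by blast
        have dl3: "d \<notin> l3" using pp_line[OF l3(1) l3(2)] nad by blast
        obtain q where q: "q \<in> l3" "pp d q" using proj_ex[OF l3(1) dP dl3] by blast
        have qx: "q \<noteq> x" using unique_line[OF la(1) l3(1) la(2,3) l3(2)] q(1) l3(3) ax by metis
        have qy: "q \<noteq> y" using unique_line[OF ly(1) l3(1) ly(2,3) l3(2)] q(1) l3(4) ay' by metis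
        have "a \<noteq> d" using am d by blast
        moreover have "pp d x" using pp_line[OF m(1) d(1) m(2)] .
        moreover have "pp a q" using pp_line[OF l3(1) l3(2) q(1)] .
        moreover have "pp d y" using pp_sym[OF d(2)] .
        ultimately have "Rs (x,a) (q,d)" "Rs (q,d) (y,a)" using qx qy q va ay by auto
        then show ?thesis by (rule W2I2)
      qed
    qed
  qed
qed

lemma lemA3: assumes va: "pp a x" and wb: "pp b y" and nxb: "\<not> pp x b" and nay: "\<not> pp a y"
  shows "W2 (x,a) (y,b)"
proof -
  have xP: "x \<in> P" "a \<in> P" "y \<in> P" "b \<in> P" using va wb pp_P by blast+
  show ?thesis
  proof (cases "a = x")
    case ax: False
    obtain la where la: "la \<in> L" "a \<in> la" "x \<in> la" using pp_ex_line[OF va ax] by blast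
    have yla: "y \<notin> la" using pp_line[OF la(1) la(2)] nay by blast
    have bla: "b \<notin> la" using pp_line[OF la(1) la(3)] nxb by blast
    obtain d where d: "d \<in> la" "pp y d" using proj_ex[OF la(1) xP(3) yla] by blast
    obtain q where q: "q \<in> la" "pp b q" using proj_ex[OF la(1) xP(4) bla] by blast
    have "x \<noteq> q" using q nxb pp_sym by blast
    moreover have "a \<noteq> d" using d nay pp_sym by blast
    moreover have "q \<noteq> y" "d \<noteq> b" using q d yla bla by blast+
    moreover have "pp a q" "pp d x" "pp d q" using pp_line[OF la(1)] la d q by blast+
    moreover have "pp d y" using pp_sym[OF d(2)] .
    ultimately have "Rs (x,a) (q,d)" "Rs (q,d) (y,b)" using va wb q by auto
    then show ?thesis by (rule W2I2)
  next
    case ax: True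
    show ?thesis
    proof (cases "b = y")
      case by': False
      obtain lb where lb: "lb \<in> L" "b \<in> lb" "y \<in> lb" using pp_ex_line[OF wb by'] by blast
      have xlb: "x \<notin> lb" using pp_line[OF lb(1) _ lb(2)] nxb by blast
      obtain d where d: "d \<in> lb" "pp x d" using proj_ex[OF lb(1) xP(1) xlb] by blast
      have "x \<noteq> d" using xlb d by blast
      moreover have "d \<noteq> y" using d nay ax by blast
      moreover have "d \<noteq> b" using d nxb by blast
      moreover have "pp d y" "pp b d" "pp d d" using pp_line[OF lb(1)] lb d by blast+
      moreover have "pp d x" using pp_sym[OF d(2)] .
      ultimately have "Rs (x,a) (d,d)" "Rs (d,d) (y,b)" using ax va wb d by auto
      then show ?thesis by (rule W2I2)
    next
      case by': True
      obtain l where l: "l \<in> L" "x \<in> l" using line_exists xP by blast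
      have yl: "y \<notin> l" using pp_line[OF l(1) l(2)] nay ax by blast
      obtain t where t: "t \<in> l" "pp y t" using proj_ex[OF l(1) xP(3) yl] by blast
      have "x \<noteq> t" using t nay ax pp_sym by blast
      moreover have "t \<noteq> y" using t yl by blast
      moreover have "pp t x" "pp t t" "pp x t" using pp_line[OF l(1)] l t by blast+
      moreover have "pp t y" using pp_sym[OF t(2)] .
      ultimately have "Rs (x,a) (t,t)" "Rs (t,t) (y,b)" using ax by' va wb t by auto
      then show ?thesis by (rule W2I2)
    qed
  qed
qed

lemma lemA: assumes va: "pp a x" and wb: "pp b y" and eps: "pp x b \<longleftrightarrow> pp a y"
  shows "W2 (x,a) (y,b)"
proof (cases "pp x b")
  case True
  then have ay: "pp a y" using eps by blast
  show ?thesis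
  proof (cases "x = y")
    case xy: True
    show ?thesis
    proof (cases "a = b")
      case True then show ?thesis using xy unfolding W2_def by simp
    next
      case False then show ?thesis using lemA1[OF va] wb xy by simp
    qed
  next
    case xy: False
    show ?thesis
    proof (cases "a = b")
      case ab: False
      then show ?thesis unfolding W2_def using xy va wb ay pp_sym[OF True] by simp
    next
      case ab: True
      then show ?thesis using lemA2[OF va ay xy] by simp
    qed
  qed
next
  case False
  then show ?thesis using lemA3[OF va wb] eps by blast
qed

lemma line_fact: assumes "l \<in> L" "l = {x,a,z}" "x \<noteq> a" "x \<noteq> z" "a \<noteq> z" "u \<in> P"
  shows "(pp u x \<or> pp u a \<or> pp u z) \<and> (pp u x \<and> pp u a \<longrightarrow> pp u z) \<and> (pp u x \<and> pp u z \<longrightarrow> pp u a)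
    \<and> (pp u a \<and> pp u z \<longrightarrow> pp u x)"
proof (cases "u \<in> l")
  case True
  then show ?thesis using pp_line[OF assms(1) True] assms(2) by simp
next
  case False
  obtain s where "s \<in> l" "pp u s" using proj_ex[OF assms(1,6) False] by blast
  then have "pp u x \<or> pp u a \<or> pp u z" using assms(2) by auto
  moreover have "x \<in> l" "a \<in> l" "z \<in> l" using assms(2) by auto
  ultimately show ?thesis using triangle[OF assms(1)] False assms(3-5) by blast
qed

lemma lemB: assumes va: "pp a x" and wb: "pp b y" and eps: "\<not> (pp x b \<longleftrightarrow> pp a y)"
  shows "\<exists>p c. Rs (x,a) (p,c) \<and> pp c p \<and> (pp p b \<longleftrightarrow> pp c y)"
proof -
  have xP: "x \<in> P" "a \<in> P" "y \<in> P" "b \<in> P" using va wb pp_P by blast+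
  show ?thesis
  proof (cases "a = x")
    case ax: True
    show ?thesis
    proof (cases "pp x b")
      case True
      then have nxy: "\<not> pp x y" using eps ax by blast
      have bx: "x \<noteq> b" using nxy wb by blast
      have "Rs (x,a) (b,b)" using ax bx True pp_sym[OF True] pp_refl xP by simp
      moreover have "pp b b" using pp_refl xP by blast
      ultimately show ?thesis using wb by blast
    next
      case False
      then have xy: "pp x y" using eps ax by blast
      have bx: "x \<noteq> y" using False pp_sym[OF wb] by blast
      have "Rs (x,a) (y,y)" using ax bx xy pp_sym[OF xy] pp_refl xP by simp
      moreover have "pp y y" using pp_refl xP by blast
      ultimately show ?thesis using pp_sym[OF wb] by blast
    qed
  next
    case ax: False
    obtain la where la: "la \<in> L" "a \<in> la" "x \<in> la" using pp_ex_line[OF va ax] by blast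
    obtain z where z: "la = {x,a,z}" "z \<noteq> x" "z \<noteq> a" using third[OF la(1,3,2)] ax by metis
    have ppl: "pp x a" "pp a x" "pp x z" "pp z x" "pp a z" "pp z a" "pp x x" "pp a a" "pp z z"
      using pp_line[OF la(1)] z(1) by auto
    have Fy: "(pp y x \<or> pp y a \<or> pp y z) \<and> (pp y x \<and> pp y a \<longrightarrow> pp y z) \<and> (pp y x \<and> pp y z \<longrightarrow> pp y a)
      \<and> (pp y a \<and> pp y z \<longrightarrow> pp y x)" using line_fact[OF la(1) z(1)] ax z xP by metis
    have Fb: "(pp b x \<or> pp b a \<or> pp b z) \<and> (pp b x \<and> pp b a \<longrightarrow> pp b z) \<and> (pp b x \<and> pp b z \<longrightarrow> pp b a)
      \<and> (pp b a \<and> pp b z \<longrightarrow> pp b x)" using line_fact[OF la(1) z(1)] ax z xP by metis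
    have sy: "pp x b = pp b x" "pp a y = pp y a" "pp a b = pp b a" "pp z b = pp b z" "pp x y = pp y x" "pp z y = pp y z"
      using pp_sym by blast+
    have key: "(pp a b \<longleftrightarrow> pp x y) \<or> (pp a b \<longleftrightarrow> pp z y) \<or> (pp z b \<longleftrightarrow> pp x y) \<or> (pp z b \<longleftrightarrow> pp z y)"
      using Fy Fb eps unfolding sy by blast
    have R: "Rs (x,a) (a,x)" "Rs (x,a) (a,z)" "Rs (x,a) (z,x)" "Rs (x,a) (z,z)"
      using ppl ax z by auto
    from key show ?thesis
    proof (elim disjE)
      assume "pp a b \<longleftrightarrow> pp x y" then show ?thesis using R(1) ppl by blast
    next
      assume "pp a b \<longleftrightarrow> pp z y" then show ?thesis using R(2) ppl by blast
    next
      assume "pp z b \<longleftrightarrow> pp x y" then show ?thesis using R(3) ppl by blast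
    next
      assume "pp z b \<longleftrightarrow> pp z y" then show ?thesis using R(4) ppl by blast
    qed
  qed
qed

lemma W3: assumes va: "pp a x" and wb: "pp b y"
  shows "W2 (x,a) (y,b) \<or> (\<exists>u. Rs (x,a) u \<and> W2 u (y,b))"
proof (cases "pp x b \<longleftrightarrow> pp a y")
  case True
  then show ?thesis using lemA[OF va wb] by blast
next
  case False
  then obtain p c where "Rs (x,a) (p,c)" "pp c p" "pp p b \<longleftrightarrow> pp c y" using lemB[OF va wb] by blast
  then show ?thesis using lemA[of c p b y] wb by blast
qed

lemma far: assumes nxy: "\<not> pp x y" and bx: "pp b x" and by': "pp b y"
  shows "\<not> W2 (x,x) (y,b)"
proof
  assume W: "W2 (x,x) (y,b)"
  have xP: "x \<in> P" "y \<in> P" "b \<in> P" using bx by' pp_P by blast+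
  have "x \<noteq> y" using nxy pp_refl xP by blast
  moreover have "\<not> Rs (x,x) (y,b)" using nxy by simp
  ultimately obtain q d where R1: "Rs (x,x) (q,d)" and R2: "Rs (q,d) (y,b)" using W unfolding W2_def by auto
  have xb: "x \<noteq> b" using nxy by' by blast
  obtain l where l: "l \<in> L" "b \<in> l" "x \<in> l" using pp_ex_line[OF bx] xb by metis
  have q: "q \<noteq> x" "pp q x" "pp q b" using R1 R2 pp_sym by auto
  have ql: "q \<in> l" using triangle[OF l(1,3,2) xb q(2,3)] .
  have d: "pp d x" "pp d q" "pp d y" "d \<noteq> b" using R1 R2 by auto
  have dl: "d \<in> l" using triangle[OF l(1,3) ql q(1)[symmetric] d(1,2)] .
  have yl: "y \<notin> l" using pp_line[OF l(1) _ l(3)] nxy pp_sym by blast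
  have "d = b" using proj_unique[OF l(1) xP(2) yl dl l(2)] pp_sym[OF d(3)] pp_sym[OF by'] .
  then show False using d(4) by blast
qed

lemma far_ex: "\<exists>x y b. \<not> pp x y \<and> pp b x \<and> pp b y \<and> x \<in> P"
proof -
  obtain x where x: "x \<in> P" using Pne by blast
  obtain l where l: "l \<in> L" "x \<in> l" using line_exists[OF x] by blast
  obtain p where p: "p \<in> l" "p \<noteq> x" using line3[OF l(1)] l(2) by blast
  have pP: "p \<in> P" using p l line_sub by blast
  obtain m where m: "m \<in> L" "p \<in> m" "m \<noteq> l" using third_line[OF pP l(1) l(1) p(1) p(1)] by blast
  obtain y where y: "y \<in> m" "y \<noteq> p" using line3[OF m(1)] m(2) by blast
  have nxy: "\<not> pp x y"
  proof
    assume xy: "pp x y"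
    have "x \<noteq> y" using unique_line[OF l(1) m(1) l(2) p(1) _ m(2) p(2)[symmetric]] y(1) m(3) by blast
    then have "y \<in> l" using triangle[OF l(1,2) p(1) p(2)[symmetric]] pp_sym[OF xy] pp_line[OF m(1) y(1) m(2)] by blast
    then show False using unique_line[OF l(1) m(1) p(1) _ m(2) y(1) y(2)[symmetric]] m(3) by blast
  qed
  have "pp p x" "pp p y" using pp_line[OF l(1) p(1) l(2)] pp_line[OF m(1) m(2) y(1)] .
  then show ?thesis using nxy x by blast
qed

end



locale gqi = gq P L for P :: "'p set" and L +
  fixes P' :: "'q set" and L' :: "'q set set" and f :: "'p \<Rightarrow> 'q"
  assumes iso: "geom_iso f P L P' L'"
begin

lemma inj: "inj_on f P" and img: "f ` P = P'" and limg: "(\<lambda>l. f ` l) ` L = L'"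
  using iso unfolding geom_iso_def bij_betw_def by auto

lemma coll_f: assumes "x \<in> P" "a \<in> P" shows "collinear L' (f x) (f a) \<longleftrightarrow> collinear L x a"
proof
  assume "collinear L' (f x) (f a)"
  then obtain l' where "l' \<in> L'" "f x \<in> l'" "f a \<in> l'" unfolding collinear_def by blast
  then obtain l where l: "l \<in> L" "f x \<in> f ` l" "f a \<in> f ` l" using limg by blast
  have lP: "l \<subseteq> P" using line_sub l(1) .
  have "x \<in> l" using l(2) lP inj assms(1) by (auto simp: inj_on_def)
  moreover have "a \<in> l" using l(3) lP inj assms(2) by (auto simp: inj_on_def)
  ultimately show "collinear L x a" unfolding collinear_def using l(1) by blast
next
  assume "collinear L x a"
  then obtain l where "l \<in> L" "x \<in> l" "a \<in> l" unfolding collinear_def by blast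
  then show "collinear L' (f x) (f a)" unfolding collinear_def using limg by blast
qed

lemma perp_f: assumes "x \<in> P" "a \<in> P" shows "f a \<in> perp P' L' (f x) \<longleftrightarrow> pp a x"
proof -
  have "f a \<in> P'" using img assms by blast
  moreover have "f a = f x \<longleftrightarrow> a = x" using inj assms unfolding inj_on_def by blast
  ultimately show ?thesis unfolding perp_def pp_def using coll_f[OF assms] assms
    unfolding collinear_def by auto
qed

lemma perp_sub: assumes "x \<in> P" "u \<in> perp P' L' (f x)" shows "\<exists>a. u = f a \<and> pp a x"
proof -
  have "u \<in> P'" using assms img unfolding perp_def by auto
  then obtain a where a: "a \<in> P" "u = f a" using img by blast
  then show ?thesis using perp_f[OF assms(1) a(1)] assms(2) by blast
qed

abbreviation "BP \<equiv> bigP P L P' L' f"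
abbreviation "BL \<equiv> bigL P L P' L' f"
abbreviation "G \<equiv> coll_graph BP BL"

definition h :: "'p \<times> 'p \<Rightarrow> 'p \<times> 'q" where "h v = (fst v, f (snd v))"

lemma h_simp[simp]: "h (x,a) = (x, f a)" unfolding h_def by simp

lemma BP_iff: "(x,u) \<in> BP \<longleftrightarrow> x \<in> P \<and> (\<exists>a. u = f a \<and> pp a x)"
  unfolding bigP_def using perp_sub perp_f pp_P by auto

lemma perp_P: "a \<in> P \<Longrightarrow> y \<in> P \<Longrightarrow> y \<in> perp P L a \<longleftrightarrow> pp y a"
  unfolding perp_def pp_def collinear_def by auto

lemma perpset_img: assumes "T \<subseteq> P" "C \<subseteq> P" "\<And>t. t \<in> P \<Longrightarrow> (\<forall>s\<in>T. pp t s) \<longleftrightarrow> t \<in> C"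
  shows "perpset P' L' (f ` T) = f ` C"
proof
  show "perpset P' L' (f ` T) \<subseteq> f ` C"
  proof
    fix u assume u: "u \<in> perpset P' L' (f ` T)"
    then have "u \<in> P'" unfolding perpset_def by blast
    then obtain t where t: "t \<in> P" "u = f t" using img by blast
    have "\<forall>s\<in>T. pp t s" using u t perp_f assms(1) unfolding perpset_def by blast
    then show "u \<in> f ` C" using assms(3) t by blast
  qed
next
  show "f ` C \<subseteq> perpset P' L' (f ` T)"
  proof
    fix u assume "u \<in> f ` C"
    then obtain t where t: "t \<in> C" "u = f t" by blast
    have tP: "t \<in> P" using t assms(2) by blast
    have "\<forall>s\<in>T. pp t s" using assms(3)[OF tP] t by blast
    then show "u \<in> perpset P' L' (f ` T)" unfolding perpset_def using t tP img perp_f assms(1) by blast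
  qed
qed

lemma perpset_P: assumes "T \<subseteq> P" "C \<subseteq> P" "\<And>t. t \<in> P \<Longrightarrow> (\<forall>s\<in>T. pp t s) \<longleftrightarrow> t \<in> C"
  shows "perpset P L T = C"
  unfolding perpset_def using perp_P assms by blast

lemma bigL_I: assumes "(x,u) \<in> BP" "(y,v) \<in> BP" "(z,w) \<in> BP" "x \<noteq> y" "y \<noteq> z" "x \<noteq> z"
  "{x,y,z} \<in> L \<or> complete_triad P L {x,y,z}" "u \<noteq> v" "v \<noteq> w" "u \<noteq> w"
  "{u,v,w} = perpset P' L' (f ` {x,y,z})"
  shows "{(x,u),(y,v),(z,w)} \<in> BL"
  unfolding bigL_def using assms by blast

lemma three: assumes "p \<in> {(x1::'p,u1::'q),(x2,u2),(x3,u3)}" "r \<in> {(x1,u1),(x2,u2),(x3,u3)}" "p \<noteq> r"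
  "x1 \<noteq> x2" "x2 \<noteq> x3" "x1 \<noteq> x3" 
  shows "fst p \<noteq> fst r \<and> (u1 \<noteq> u2 \<and> u2 \<noteq> u3 \<and> u1 \<noteq> u3 \<longrightarrow> snd p \<noteq> snd r) \<and> fst p \<in> {x1,x2,x3} \<and> fst r \<in> {x1,x2,x3}
    \<and> snd p \<in> {u1,u2,u3}"
  using assms by auto


lemma G_Rs1: assumes va: "pp a x" and wb: "pp b y" and G: "G (x, f a) (y, f b)"
  shows "Rs (x,a) (y,b)"
proof -
  have xP: "x \<in> P" "a \<in> P" "y \<in> P" "b \<in> P" using va wb pp_P by blast+
  from G have ne: "(x, f a) \<noteq> (y, f b)" and "\<exists>l\<in>BL. (x, f a) \<in> l \<and> (y, f b) \<in> l"
    unfolding coll_graph_def by blast+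
  then obtain x1 y1 z1 u v w where
    m1: "(x, f a) \<in> {(x1,u),(y1,v),(z1,w)}" and m2: "(y, f b) \<in> {(x1,u),(y1,v),(z1,w)}"
    and d: "x1 \<noteq> y1" "y1 \<noteq> z1" "x1 \<noteq> z1" "u \<noteq> v" "v \<noteq> w" "u \<noteq> w"
    and ps: "{u,v,w} = perpset P' L' (f ` {x1,y1,z1})"
    unfolding bigL_def by blast
  have t1: "x \<noteq> y" "f a \<noteq> f b" "x \<in> {x1,y1,z1}" "y \<in> {x1,y1,z1}" "f a \<in> {u,v,w}"
    using three[OF m1 m2 ne d(1-3)] d(4-6) by auto
  have t2: "f b \<in> {u,v,w}" using three[OF m2 m1 ne[symmetric] d(1-3)] by auto
  have "f a \<in> perp P' L' (f y)" using t1(4,5) ps unfolding perpset_def by blast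
  then have "pp a y" using perp_f xP by blast
  moreover have "f b \<in> perp P' L' (f x)" using t1(3) t2 ps unfolding perpset_def by blast
  then have "pp b x" using perp_f xP by blast
  ultimately show ?thesis using t1(1,2) va wb by auto
qed

lemma G_Rs2: assumes R: "Rs (x,a) (y,b)"
  shows "G (x, f a) (y, f b)"
proof -
  have r: "x \<noteq> y" "a \<noteq> b" "pp a x" "pp a y" "pp b x" "pp b y" using R by auto
  have xP: "x \<in> P" "a \<in> P" "y \<in> P" "b \<in> P" using r pp_P by blast+
  have fab: "f a \<noteq> f b" using inj xP r(2) unfolding inj_on_def by blast
  have m1: "(x, f a) \<in> BP" "(y, f b) \<in> BP" using BP_iff r xP by blast+
  have "\<exists>l\<in>BL. (x, f a) \<in> l \<and> (y, f b) \<in> l"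
  proof (cases "pp x y")
    case True
    obtain l where l: "l \<in> L" "x \<in> l" "y \<in> l" using pp_ex_line[OF True r(1)] by blast
    obtain z where z: "l = {x,y,z}" "z \<noteq> x" "z \<noteq> y" using third[OF l r(1)] by blast
    have al: "a \<in> l" "b \<in> l" using triangle[OF l(1,2,3) r(1)] r(3-6) by blast+
    obtain c where c: "l = {a,b,c}" "c \<noteq> a" "c \<noteq> b" using third[OF l(1) al r(2)] by blast
    have lP: "l \<subseteq> P" using line_sub l(1) .
    have cP: "c \<in> P" "z \<in> P" using lP c(1) z(1) by auto
    have fc: "f c \<noteq> f a" "f c \<noteq> f b" using inj xP cP c unfolding inj_on_def by metis+
    have "pp c z" using pp_line[OF l(1)] c(1) z(1) by auto
    then have m3: "(z, f c) \<in> BP" using BP_iff cP by blast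
    have key: "(\<forall>s\<in>l. pp t s) \<longleftrightarrow> t \<in> l" if "t \<in> P" for t
      using triangle[OF l(1,2,3) r(1)] pp_line[OF l(1)] l(2,3) by blast
    have "{f a, f b, f c} = f ` l" using c(1) by simp
    also have "\<dots> = perpset P' L' (f ` l)" using perpset_img[OF lP lP key] by simp
    also have "\<dots> = perpset P' L' (f ` {x,y,z})" using z(1) by simp
    finally have "{f a, f b, f c} = perpset P' L' (f ` {x,y,z})" .
    then have "{(x, f a), (y, f b), (z, f c)} \<in> BL"
      using bigL_I[OF m1 m3 r(1) z(3)[symmetric] z(2)[symmetric] _ fab fc(2)[symmetric] fc(1)[symmetric]] l(1) z(1) by blast
    then show ?thesis by blast
  next
    case False
    obtain z c where zc: "z \<noteq> x" "z \<noteq> y" "c \<noteq> a" "c \<noteq> b" "\<not> pp x z" "\<not> pp y z" "z \<in> P" "c \<in> P"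
      "pp c z" "pp c x" "pp c y" "pp a z" "pp b z" and call: "\<forall>t. pp t x \<and> pp t y \<longrightarrow> t = a \<or> t = b \<or> t = c"
      using regular[OF xP(1,3) False r(3-6) r(2)] by blast
    have fc: "f c \<noteq> f a" "f c \<noteq> f b" using inj xP zc(7,8) zc(3,4) unfolding inj_on_def by metis+
    have m3: "(z, f c) \<in> BP" using BP_iff zc by blast
    have TP: "{x,y,z} \<subseteq> P" "{a,b,c} \<subseteq> P" using xP zc by auto
    have key: "(\<forall>s\<in>{x,y,z}. pp t s) \<longleftrightarrow> t \<in> {a,b,c}" if "t \<in> P" for t
      using call r zc by auto
    have ps': "perpset P' L' (f ` {x,y,z}) = f ` {a,b,c}" using perpset_img[OF TP key] .
    have ps: "perpset P L {x,y,z} = {a,b,c}" using perpset_P[OF TP key] .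
    have ncol: "\<not> collinear L s t" if "s \<in> {x,y,z}" "t \<in> {x,y,z}" "s \<noteq> t" for s t
    proof
      assume "collinear L s t"
      then have "pp s t" "pp t s" unfolding pp_def using that TP by (auto simp: collinear_def)
      then show False using that False zc(5,6) by auto
    qed
    have "card {x,y,z} = 3" using r(1) zc(1,2) by auto
    moreover have "card {a,b,c} = 3" using r(2) zc(3,4) by auto
    ultimately have ct: "complete_triad P L {x,y,z}"
      unfolding complete_triad_def triad_def using TP(1) ps ncol by auto
    have "{f a, f b, f c} = perpset P' L' (f ` {x,y,z})" using ps' by simp
    then have "{(x, f a), (y, f b), (z, f c)} \<in> BL"
      using bigL_I[OF m1 m3 r(1) zc(2)[symmetric] zc(1)[symmetric] _ fab fc(2)[symmetric] fc(1)[symmetric]] ct by blast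
    then show ?thesis by blast
  qed
  then show ?thesis unfolding coll_graph_def using m1 r(1) by auto
qed

lemma G_dom: "G v w \<Longrightarrow> v \<in> BP \<and> w \<in> BP" unfolding coll_graph_def by blast

lemma BP_h: "v \<in> BP \<Longrightarrow> \<exists>x a. v = h (x,a) \<and> pp a x"
  using BP_iff by (cases v) auto

lemma W2_G: assumes "W2 v w" shows "\<exists>n\<le>2. (G ^^ n) (h v) (h w)"
proof -
  have "v = w \<or> Rs v w \<or> (\<exists>u. Rs v u \<and> Rs u w)" using assms unfolding W2_def .
  moreover have "G (h p) (h q)" if "Rs p q" for p q
    using G_Rs2[of "fst p" "snd p" "fst q" "snd q"] that by (cases p, cases q) simp
  ultimately show ?thesis
  proof (elim disjE exE conjE)
    assume "v = w" then show ?thesis by (intro exI[of _ 0]) simp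
  next
    assume "Rs v w" then have "(G ^^ 1) (h v) (h w)" unfolding relpowp_1 using \<open>\<And>p q. Rs p q \<Longrightarrow> G (h p) (h q)\<close> by blast
    then show ?thesis by (metis one_le_numeral)
  next
    fix u assume "Rs v u" "Rs u w"
    then have "G (h v) (h u)" "G (h u) (h w)" using \<open>\<And>p q. Rs p q \<Longrightarrow> G (h p) (h q)\<close> by blast+
    then have "(G ^^ 2) (h v) (h w)" by (metis One_nat_def numeral_2_eq_2 relpowp_1 relpowp_Suc_I)
    then show ?thesis by (intro exI[of _ 2]) simp
  qed
qed


end



context gqi
begin

lemma Rs_G: assumes "Rs p q" shows "G (h p) (h q)"
proof -
  obtain x a y b where pq: "p = (x,a)" "q = (y,b)" by (cases p, cases q) blast
  have "G (x, f a) (y, f b)" using G_Rs2[of x a y b] assms pq by blast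
  then show ?thesis unfolding pq by (simp only: h_simp)
qed

lemma upto3: assumes "v \<in> BP" "w \<in> BP" shows "\<exists>n\<le>3. (G ^^ n) v w"
proof -
  obtain x a where v: "v = h (x,a)" "pp a x" using BP_h[OF assms(1)] by blast
  obtain y b where w: "w = h (y,b)" "pp b y" using BP_h[OF assms(2)] by blast
  from W3[OF v(2) w(2)] show ?thesis
  proof (elim disjE exE conjE)
    assume "W2 (x,a) (y,b)"
    then obtain n where "n \<le> 2" "(G ^^ n) v w" using W2_G v w by blast
    then show ?thesis by (intro exI[of _ n]) simp
  next
    fix u assume "Rs (x,a) u" "W2 u (y,b)"
    then obtain n where n: "n \<le> 2" "(G ^^ n) (h u) w" "G v (h u)" using W2_G Rs_G v w by blast
    then have "(G ^^ Suc n) v w" using relpowp_Suc_I2 by metis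
    then show ?thesis using n(1) by (intro exI[of _ "Suc n"]) simp
  qed
qed

lemma G_W2: assumes "pp a x" "pp b y" "G (h (x,a)) (h (y,b))" shows "Rs (x,a) (y,b)"
proof -
  have "G (x, f a) (y, f b)" using assms(3) by (simp only: h_simp)
  then show ?thesis using G_Rs1[OF assms(1,2)] by blast
qed

lemma far_G: assumes nxy: "\<not> pp x y" and bx: "pp b x" and by': "pp b y" and "n < 3"
  shows "\<not> (G ^^ n) (h (x,x)) (h (y,b))"
proof
  assume Gn: "(G ^^ n) (h (x,x)) (h (y,b))"
  have xP: "x \<in> P" "y \<in> P" "b \<in> P" using bx by' pp_P by blast+
  have vx: "pp x x" using pp_refl xP by blast
  have "W2 (x,x) (y,b)"
  proof -
    have "n = 0 \<or> n = 1 \<or> n = 2" using assms(4) by auto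
    then show ?thesis
    proof (elim disjE)
      assume "n = 0" then have "(x, f x) = (y, f b)" using Gn by auto
      then show ?thesis using nxy vx by simp
    next
      assume "n = 1" then have "G (h (x,x)) (h (y,b))" using Gn by (metis relpowp_1)
      then show ?thesis using G_W2[OF vx by'] unfolding W2_def by blast
    next
      assume "n = 2"
      then have "(G ^^ Suc (Suc 0)) (h (x,x)) (h (y,b))" using Gn by (simp add: numeral_2_eq_2)
      then obtain m where m: "G (h (x,x)) m" "G m (h (y,b))" by (metis relpowp_Suc_0 relpowp_Suc_E)
      obtain q d where md: "m = h (q,d)" "pp d q" using BP_h G_dom[OF m(1)] by blast
      have "Rs (x,x) (q,d)" "Rs (q,d) (y,b)" using G_W2 m md vx by' by blast+
      then show ?thesis unfolding W2_def by blast
    qed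
  qed
  then show False using far[OF nxy bx by'] by blast
qed

end

theorem corollary3p4:
  fixes P :: "'p set" and L :: "'p set set" and P' :: "'q set" and L' :: "'q set set"
    and f :: "'p \<Rightarrow> 'q"
  assumes "gq22 P L" and "gq22 P' L'" and "geom_iso f P L P' L'"
  shows "graph_connected (bigP P L P' L' f) (coll_graph (bigP P L P' L' f) (bigL P L P' L' f))
       \<and> graph_diameter (bigP P L P' L' f) (coll_graph (bigP P L P' L' f) (bigL P L P' L' f)) 3"
proof -
  interpret gqi P L P' L' f
    by (simp add: gqi_def gqi_axioms_def gq_def assms(1,3))
  have conn: "graph_connected BP G" unfolding graph_connected_def using upto3 by blast
  have d1: "graph_dist G v w \<le> 3" if vw: "v \<in> BP" "w \<in> BP" for v w
  proof -
    obtain n where n: "n \<le> 3" "(G ^^ n) v w" using upto3[OF vw] by blast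
    have "graph_dist G v w \<le> n" unfolding graph_dist_def using n(2) by (rule Least_le)
    then show ?thesis using n(1) by linarith
  qed
  obtain x y b where xyb: "\<not> pp x y" "pp b x" "pp b y" "x \<in> P" using far_ex by blast
  have yP: "y \<in> P" using xyb pp_P by blast
  have v0: "h (x,x) \<in> BP" using BP_iff xyb(4) pp_refl[OF xyb(4)] by auto
  have w0: "h (y,b) \<in> BP" using BP_iff yP xyb(3) by auto
  obtain n where n: "n \<le> 3" "(G ^^ n) (h (x,x)) (h (y,b))" using upto3[OF v0 w0] by blast
  have le: "graph_dist G (h (x,x)) (h (y,b)) \<le> 3" using d1[OF v0 w0] .
  have "(G ^^ graph_dist G (h (x,x)) (h (y,b))) (h (x,x)) (h (y,b))"
    unfolding graph_dist_def using n(2) by (rule LeastI)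
  then have ge: "\<not> graph_dist G (h (x,x)) (h (y,b)) < 3" using far_G[OF xyb(1-3)] by blast
  have "graph_dist G (h (x,x)) (h (y,b)) = 3" using le ge by linarith
  then have "graph_diameter BP G 3" unfolding graph_diameter_def using d1 v0 w0 by blast
  then show ?thesis using conn by blast
qed

end
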